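(* Let $\varepsilon\in\{1,-1\}$ and $n\ge2$. Then $$\sum_{\sigma\in\mathcal D^D_n}\varepsilon^{\ell_D(\sigma)}q^{\mathrm{Dmaj}(\sigma)}=\sum_{\sigma\in\mathcal D^\Delta_n}\varepsilon^{\ell_B(\sigma)}(\varepsilon q)^{\mathrm{fmaj}(\sigma)}+\frac{\varepsilon}{2}\left(\sum_{\sigma\in\mathcal D^B_{n-1}}\varepsilon^{\ell_B(\sigma)}q^{\mathrm{fmaj}(\sigma)}-\sum_{\sigma\in\mathcal D^B_{n-1}}\varepsilon^{\ell_B(\sigma)}(-q)^{\mathrm{fmaj}(\sigma)}\right).$$
   Context: $B_n$ is the set of words $\sigma=\sigma_1\cdots\sigma_n$ with $\sigma_i\in\{\pm1,\dots,\pm n\}$ and $|\sigma_1|\cdots|\sigma_n|$ a permutation of $[n]$; $\mathrm{neg}(\sigma)$ is the number of negative letters; $D_n=\{\sigma\in B_n:\mathrm{neg}(\sigma)\text{ even}\}$; $\Delta_n=\{\sigma\in B_n:\sigma_n>0\}$. A derangement is an element with $\sigma_i\ne i$ for all $i$; $\mathcal D^B_n,\mathcal D^D_n,\mathcal D^\Delta_n$ denote the derangements in $B_n,D_n,\Delta_n$. $\mathrm{inv}$ in usual order, $\ell_B(\sigma)=\mathrm{inv}(\sigma)-\sum_{i:\sigma_i<0}\sigma_i$, $\ell_D(\sigma)=\ell_B(\sigma)-\mathrm{neg}(\sigma)$. Order $\prec$: $-1\prec-2\prec\cdots\prec-N\prec1\prec\cdots\prec N$; $\mathrm{maj}_\prec(w)=\sum_{i:w_i\succ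 w_{i+1}}i$; $\mathrm{fmaj}(w)=2\mathrm{maj}_\prec(w)+\mathrm{neg}(w)$; $\mathrm{Dmaj}(\sigma)=\mathrm{fmaj}(\sigma_1\cdots\sigma_{n-1}|\sigma_n|)$. *)

theory Defs
  imports Main
begin

text \<open>Signed permutations are represented as lists of integers (one-line notation,
  0-indexed list positions, entry at position i is sigma_(i+1)).\<close>

definition signed_perms :: "nat \<Rightarrow> int list set" where
  "signed_perms n = {w. length w = n \<and> distinct (map abs w) \<and> set (map abs w) = {1..int n}}"

definition neg :: "int list \<Rightarrow> nat" where
  "neg w = length (filter (\<lambda>x. x < 0) w)"

definition typeD :: "nat \<Rightarrow> int list set" where
  "typeD n = {w \<in> signed_perms n. even (neg w)}"

definition typeDelta :: "nat \<Rightarrow> int list set" where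
  "typeDelta n = {w \<in> signed_perms n. last w > 0}"

definition is_derangement :: "int list \<Rightarrow> bool" where
  "is_derangement w \<longleftrightarrow> (\<forall>i<length w. w ! i \<noteq> int (i + 1))"

definition derangB :: "nat \<Rightarrow> int list set" where
  "derangB n = {w \<in> signed_perms n. is_derangement w}"

definition derangD :: "nat \<Rightarrow> int list set" where
  "derangD n = {w \<in> typeD n. is_derangement w}"

definition derangDelta :: "nat \<Rightarrow> int list set" where
  "derangDelta n = {w \<in> typeDelta n. is_derangement w}"

definition inv :: "int list \<Rightarrow> nat" where
  "inv w = card {(i, j). i < j \<and> j < length w \<and> w ! i > w ! j}"

definition lengthB :: "int list \<Rightarrow> nat" where
  "lengthB w = inv w + nat (\<Sum>i<length w. if w ! i < 0 then - (w ! i) else 0)"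

definition lengthD :: "int list \<Rightarrow> nat" where
  "lengthD w = lengthB w - neg w"

definition prec :: "int \<Rightarrow> int \<Rightarrow> bool" where
  "prec x y \<longleftrightarrow> (x < 0 \<and> y > 0) \<or> (x < 0 \<and> y < 0 \<and> y < x) \<or> (x > 0 \<and> y > 0 \<and> x < y)"

text \<open>maj w = sum of i (1-indexed) with w_i succ w_(i+1).\<close>
definition maj_prec :: "int list \<Rightarrow> nat" where
  "maj_prec w = (\<Sum>i\<in>{1..<length w}. if prec (w ! i) (w ! (i - 1)) then i else 0)"

definition fmaj :: "int list \<Rightarrow> nat" where
  "fmaj w = 2 * maj_prec w + neg w"

definition Dmaj :: "int list \<Rightarrow> nat" where
  "Dmaj w = fmaj (butlast w @ [abs (last w)])"

end

theory Submission
  imports Defs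
begin

lemma inv_snoc: "inv (u @ [x]) = inv u + card {i. i < length u \<and> u ! i > x}"
proof -
  let ?L = "length u"
  have "{(i, j). i < j \<and> j < length (u@[x]) \<and> (u@[x]) ! i > (u@[x]) ! j}
      = {(i, j). i < j \<and> j < ?L \<and> u ! i > u ! j} \<union> (\<lambda>i. (i, ?L)) ` {i. i < ?L \<and> u ! i > x}"
    by (auto simp: nth_append less_Suc_eq split: if_splits)
  moreover have "finite {(i, j). i < j \<and> j < ?L \<and> u ! i > u ! j}"
    by (rule finite_subset[of _ "{..<?L} \<times> {..<?L}"]) auto
  moreover have "{(i, j). i < j \<and> j < ?L \<and> u ! i > u ! j} \<inter> (\<lambda>i. (i, ?L)) ` {i. i < ?L \<and> u ! i > x} = {}"
    by auto
  moreover have "card ((\<lambda>i. (i, ?L)) ` {i. i < ?L \<and> u ! i > x}) = card {i. i < ?L \<and> u ! i > x}"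
    by (rule card_image) (auto simp: inj_on_def)
  ultimately show ?thesis unfolding inv_def by (simp add: card_Un_disjoint)
qed

lemma sum_snoc: "(\<Sum>i<length (u@[x]). f ((u@[x]) ! i)) = (\<Sum>i<length u. f (u ! i)) + (f x :: int)"
proof -
  have "(\<Sum>i<length u. f ((u@[x]) ! i)) = (\<Sum>i<length u. f (u ! i))"
    by (rule sum.cong) (auto simp: nth_append)
  thus ?thesis by simp
qed

definition nsum :: "int list \<Rightarrow> int" where
  "nsum w = (\<Sum>i<length w. if w ! i < 0 then - (w ! i) else 0)"

lemma nsum_nonneg: "nsum w \<ge> 0"
  unfolding nsum_def by (rule sum_nonneg) auto

lemma lengthB_alt: "lengthB w = inv w + nat (nsum w)"
  unfolding lengthB_def nsum_def by simp

lemma nsum_snoc: "nsum (u @ [x]) = nsum u + (if x < 0 then - x else 0)"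
  unfolding nsum_def using sum_snoc[where u=u and x=x and f="\<lambda>y. if y < 0 then - y else 0"] by simp

lemma neg_snoc: "neg (u @ [x]) = neg u + (if x < 0 then 1 else 0)"
  unfolding neg_def by simp

lemma neg_le_nsum: "int (neg w) \<le> nsum w"
proof -
  have "int (neg w) = (\<Sum>i<length w. if w ! i < 0 then 1 else 0)"
    unfolding neg_def length_filter_conv_card
    by (simp add: sum.If_cases Int_def lessThan_def conj_commute)
  also have "\<dots> \<le> nsum w" unfolding nsum_def by (rule sum_mono) auto
  finally show ?thesis .
qed

lemma neg_le_lengthB: "neg w \<le> lengthB w"
  using neg_le_nsum[of w] unfolding lengthB_alt by linarith

lemma maj_prec_snoc:
  "maj_prec (u @ [x]) = maj_prec u + (if u \<noteq> [] \<and> prec x (last u) then length u else 0)"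
proof (cases "u = []")
  case True thus ?thesis by (simp add: maj_prec_def)
next
  case False
  let ?L = "length u"
  have L: "1 \<le> ?L" using False by (cases u) auto
  have "maj_prec (u @ [x]) = (\<Sum>i\<in>{1..<Suc ?L}. if prec ((u@[x]) ! i) ((u@[x]) ! (i - 1)) then i else 0)"
    unfolding maj_prec_def by simp
  also have "\<dots> = (\<Sum>i\<in>{1..<?L}. if prec ((u@[x]) ! i) ((u@[x]) ! (i - 1)) then i else 0)
      + (if prec x (last u) then ?L else 0)"
    using L False by (simp add: nth_append last_conv_nth)
  also have "(\<Sum>i\<in>{1..<?L}. if prec ((u@[x]) ! i) ((u@[x]) ! (i - 1)) then i else 0) = maj_prec u"
    unfolding maj_prec_def by (rule sum.cong) (auto simp: nth_append)
  finally show ?thesis using False by simp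
qed

lemma fmaj_snoc_max:
  assumes "\<forall>y\<in>set u. y < x" "x > 0"
  shows "fmaj (u @ [x]) = fmaj u"
proof -
  have "\<not> (u \<noteq> [] \<and> prec x (last u))"
  proof
    assume h: "u \<noteq> [] \<and> prec x (last u)"
    hence "last u < x" using assms(1) last_in_set[of u] by blast
    thus False using h assms(2) by (auto simp: prec_def)
  qed
  thus ?thesis using assms(2) unfolding fmaj_def by (simp add: maj_prec_snoc neg_snoc)
qed

lemma deranged_snoc: "is_derangement (u @ [x]) \<longleftrightarrow> is_derangement u \<and> x \<noteq> int (length u + 1)"
  unfolding is_derangement_def
  by (auto simp: nth_append less_Suc_eq)

lemma sp_snoc_down:
  assumes "u @ [x] \<in> signed_perms (Suc k)" "\<bar>x\<bar> = int (Suc k)"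
  shows "u \<in> signed_perms k"
proof -
  have d: "distinct (map abs u)" "\<bar>x\<bar> \<notin> set (map abs u)" and s: "set (map abs u) \<union> {\<bar>x\<bar>} = {1..int (Suc k)}"
    and l: "length u = k"
    using assms(1) by (auto simp: signed_perms_def)
  have "set (map abs u) = {1..int (Suc k)} - {\<bar>x\<bar>}" using d(2) s by blast
  also have "\<dots> = {1..int k}" using assms(2) by auto
  finally show ?thesis using d l by (simp add: signed_perms_def)
qed

lemma sp_snoc_up:
  assumes "u \<in> signed_perms k" "\<bar>x\<bar> = int (Suc k)"
  shows "u @ [x] \<in> signed_perms (Suc k)"
proof -
  have d: "distinct (map abs u)" "set (map abs u) = {1..int k}" "length u = k"
    using assms(1) by (auto simp: signed_perms_def)
  have "\<bar>x\<bar> \<notin> set (map abs u)" using d(2) assms(2) by auto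
  moreover have "set (map abs u) \<union> {\<bar>x\<bar>} = {1..int (Suc k)}" using d(2) assms(2) by auto
  ultimately show ?thesis using d by (simp add: signed_perms_def)
qed

lemma sp_abs_last:
  assumes "u @ [x] \<in> signed_perms n" "\<bar>y\<bar> = \<bar>x\<bar>"
  shows "u @ [y] \<in> signed_perms n"
  using assms by (simp add: signed_perms_def)

lemma sp_bounds:
  assumes "w \<in> signed_perms n" "y \<in> set w"
  shows "1 \<le> \<bar>y\<bar> \<and> \<bar>y\<bar> \<le> int n"
proof -
  have "\<bar>y\<bar> \<in> set (map abs w)" using assms(2) by auto
  thus ?thesis using assms(1) by (auto simp: signed_perms_def)
qed

lemma sp_len: "w \<in> signed_perms n \<Longrightarrow> length w = n"
  by (simp add: signed_perms_def)

lemma count_small: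
  assumes "u @ [x] \<in> signed_perms n"
  shows "card {i. i < length u \<and> \<bar>u ! i\<bar> < \<bar>x\<bar>} = nat (\<bar>x\<bar> - 1)"
proof -
  have d: "distinct (map abs u)" "\<bar>x\<bar> \<notin> set (map abs u)" and s: "set (map abs u) \<union> {\<bar>x\<bar>} = {1..int n}"
    using assms(1) by (auto simp: signed_perms_def)
  have inj: "inj_on (\<lambda>i. \<bar>u ! i\<bar>) {i. i < length u \<and> \<bar>u ! i\<bar> < \<bar>x\<bar>}"
    using d(1) by (auto simp: inj_on_def distinct_conv_nth)
  have xr: "\<bar>x\<bar> \<in> {1..int n}" using s by auto
  have "(\<lambda>i. \<bar>u ! i\<bar>) ` {i. i < length u \<and> \<bar>u ! i\<bar> < \<bar>x\<bar>} = {v \<in> set (map abs u). v < \<bar>x\<bar>}"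
    by (auto simp: in_set_conv_nth intro: image_eqI nth_mem)
  also have "\<dots> = {1..\<bar>x\<bar> - 1}"
  proof
    show "{v \<in> set (map abs u). v < \<bar>x\<bar>} \<subseteq> {1..\<bar>x\<bar> - 1}" using s by auto
    show "{1..\<bar>x\<bar> - 1} \<subseteq> {v \<in> set (map abs u). v < \<bar>x\<bar>}"
    proof
      fix v assume v: "v \<in> {1..\<bar>x\<bar> - 1}"
      hence "v \<in> {1..int n}" using xr by auto
      hence "v \<in> set (map abs u) \<union> {\<bar>x\<bar>}" using s by blast
      thus "v \<in> {v \<in> set (map abs u). v < \<bar>x\<bar>}" using v by auto
    qed
  qed
  finally have "card ((\<lambda>i. \<bar>u ! i\<bar>) ` {i. i < length u \<and> \<bar>u ! i\<bar> < \<bar>x\<bar>}) = nat (\<bar>x\<bar> - 1)" by simp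
  thus ?thesis using card_image[OF inj] by simp
qed

lemma inv_flip:
  assumes "u @ [m] \<in> signed_perms n" "m > 0"
  shows "inv (u @ [- m]) = inv (u @ [m]) + nat (m - 1)"
proof -
  have d: "m \<notin> set (map abs u)" using assms(1) by (auto simp: signed_perms_def)
  let ?A = "{i. i < length u \<and> u ! i > m}" and ?B = "{i. i < length u \<and> \<bar>u ! i\<bar> < \<bar>m\<bar>}"
  have ne: "\<And>i. i < length u \<Longrightarrow> \<bar>u ! i\<bar> \<noteq> m" using d by (metis image_eqI nth_mem set_map)
  have "{i. i < length u \<and> u ! i > - m} = ?A \<union> ?B"
    using ne assms(2) by (auto; smt (verit))
  moreover have "?A \<inter> ?B = {}" using assms(2) by auto
  ultimately have "card {i. i < length u \<and> u ! i > - m} = card ?A + card ?B"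
    by (simp add: card_Un_disjoint)
  also have "card ?B = nat (m - 1)" using count_small[OF assms(1)] assms(2) by simp
  finally show ?thesis by (simp add: inv_snoc)
qed

lemma lengthB_flip:
  assumes "u @ [m] \<in> signed_perms n" "m > 0"
  shows "lengthB (u @ [- m]) = lengthB (u @ [m]) + 2 * nat m - 1"
proof -
  have "lengthB (u @ [- m]) = inv (u @ [m]) + nat (m - 1) + nat (nsum u + m)"
    unfolding lengthB_alt using inv_flip[OF assms] assms(2) by (simp add: nsum_snoc)
  moreover have "lengthB (u @ [m]) = inv (u @ [m]) + nat (nsum u)"
    unfolding lengthB_alt using assms(2) by (simp add: nsum_snoc)
  ultimately show ?thesis using nsum_nonneg[of u] assms(2) by simp
qed

definition gg :: "int list \<Rightarrow> int list" where
  "gg w = butlast w @ [\<bar>last w\<bar>]"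

lemma gg_snoc[simp]: "gg (u @ [x]) = u @ [\<bar>x\<bar>]"
  by (simp add: gg_def)

lemma pow_eq:
  fixes e :: "'a :: comm_ring_1"
  assumes "e * e = 1" "a + 2 * c = b + 2 * d"
  shows "e ^ a = e ^ b"
proof -
  have e2: "e ^ (2 * j) = 1" for j by (simp add: power_mult assms(1) power2_eq_square)
  have "e ^ a = e ^ a * e ^ (2 * c)" by (simp add: e2)
  also have "\<dots> = e ^ (b + 2 * d)" by (simp add: power_add[symmetric] assms(2))
  also have "\<dots> = e ^ b" by (simp add: power_add e2)
  finally show ?thesis .
qed

lemma finite_sp: "finite (signed_perms n)"
proof (rule finite_subset)
  show "signed_perms n \<subseteq> {xs. set xs \<subseteq> {- int n..int n} \<and> length xs = n}"
  proof
    fix w assume w: "w \<in> signed_perms n"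
    have "\<And>y. y \<in> set w \<Longrightarrow> y \<in> {- int n..int n}" using sp_bounds[OF w] by fastforce
    thus "w \<in> {xs. set xs \<subseteq> {- int n..int n} \<and> length xs = n}" using sp_len[OF w] by auto
  qed
  show "finite {xs. set xs \<subseteq> {- int n..int n} \<and> length xs = n}"
    by (rule finite_lists_length_eq) simp
qed

lemma sp_snoc_ex:
  assumes "w \<in> signed_perms (Suc k)"
  obtains u x where "w = u @ [x]" "length u = k"
proof -
  have "w \<noteq> []" using sp_len[OF assms] by auto
  then obtain u x where "w = u @ [x]" by (metis rev_exhaust)
  thus ?thesis using that sp_len[OF assms] by simp
qed

lemma sign_lemma:
  fixes e :: "'a :: comm_ring_1"
  assumes e: "e * e = 1" and w: "w \<in> signed_perms (Suc k)"
  shows "e ^ lengthD w = e ^ (lengthB (gg w) + neg (gg w))"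
proof -
  obtain u x where ux: "w = u @ [x]" "length u = k" using sp_snoc_ex[OF w] .
  have x0: "x \<noteq> 0" using sp_bounds[OF w, of x] ux by auto
  have le: "neg w \<le> lengthB w" by (rule neg_le_lengthB)
  show ?thesis
  proof (cases "x > 0")
    case True
    hence g: "gg w = w" using ux by simp
    show ?thesis unfolding g lengthD_def
      by (rule pow_eq[OF e, where c = "neg w" and d = 0]) (use le in simp)
  next
    case False
    hence xn: "x < 0" using x0 by simp
    define m where "m = - x"
    have m: "m > 0" "x = - m" using xn by (auto simp: m_def)
    have sp: "u @ [m] \<in> signed_perms (Suc k)" using sp_abs_last[OF w[unfolded ux], of m] m by simp
    have g: "gg w = u @ [m]" using ux m by simp
    have lb: "lengthB w = lengthB (u @ [m]) + 2 * nat m - 1"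
      using lengthB_flip[OF sp m(1)] ux m by simp
    have ng: "neg w = neg (u @ [m]) + 1" using ux m by (simp add: neg_snoc)
    show ?thesis unfolding g lengthD_def
      by (rule pow_eq[OF e, where c = "neg (u @ [m]) + 1" and d = "nat m"]) (use le lb ng m in simp)
  qed
qed

lemma gg_inj: "inj_on gg (derangD (Suc k))"
proof (rule inj_onI)
  fix s t assume s: "s \<in> derangD (Suc k)" and t: "t \<in> derangD (Suc k)" and eq: "gg s = gg t"
  have ss: "s \<in> signed_perms (Suc k)" "even (neg s)" using s by (auto simp: derangD_def typeD_def)
  have ts: "t \<in> signed_perms (Suc k)" "even (neg t)" using t by (auto simp: derangD_def typeD_def)
  obtain u x where ux: "s = u @ [x]" "length u = k" using sp_snoc_ex[OF ss(1)] .
  obtain v y where vy: "t = v @ [y]" "length v = k" using sp_snoc_ex[OF ts(1)] .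
  have x0: "x \<noteq> 0" using sp_bounds[OF ss(1), of x] ux by auto
  have y0: "y \<noteq> 0" using sp_bounds[OF ts(1), of y] vy by auto
  have uv: "u = v" "\<bar>x\<bar> = \<bar>y\<bar>" using eq ux vy by auto
  have "(x < 0) = (y < 0)" using ss(2) ts(2) ux vy uv by (auto simp: neg_snoc split: if_splits)
  hence "x = y" using uv(2) x0 y0 by (auto simp: abs_if split: if_splits)
  thus "s = t" using ux vy uv by simp
qed

lemma gg_image:
  assumes "k \<ge> 1"
  shows "gg ` derangD (Suc k) = derangDelta (Suc k) \<union> (\<lambda>t. t @ [int (Suc k)]) ` {t \<in> derangB k. odd (neg t)}"
proof
  show "gg ` derangD (Suc k) \<subseteq> derangDelta (Suc k) \<union> (\<lambda>t. t @ [int (Suc k)]) ` {t \<in> derangB k. odd (neg t)}"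
  proof
    fix y assume "y \<in> gg ` derangD (Suc k)"
    then obtain s where s: "s \<in> derangD (Suc k)" and y: "y = gg s" by auto
    have ss: "s \<in> signed_perms (Suc k)" "even (neg s)" "is_derangement s"
      using s by (auto simp: derangD_def typeD_def)
    obtain u x where ux: "s = u @ [x]" "length u = k" using sp_snoc_ex[OF ss(1)] .
    have x0: "x \<noteq> 0" using sp_bounds[OF ss(1), of x] ux by auto
    have du: "is_derangement u" "x \<noteq> int (Suc k)" using ss(3) ux by (auto simp: deranged_snoc)
    show "y \<in> derangDelta (Suc k) \<union> (\<lambda>t. t @ [int (Suc k)]) ` {t \<in> derangB k. odd (neg t)}"
    proof (cases "x = - int (Suc k)")
      case True
      have "u \<in> signed_perms k" using sp_snoc_down[of u x k] ss(1) ux True by simp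
      moreover have "odd (neg u)" using ss(2) ux True by (simp add: neg_snoc)
      moreover have "y = u @ [int (Suc k)]" using y ux True by simp
      ultimately show ?thesis using du by (auto simp: derangB_def)
    next
      case False
      have "y = u @ [\<bar>x\<bar>]" using y ux by simp
      moreover have "u @ [\<bar>x\<bar>] \<in> signed_perms (Suc k)" using sp_abs_last[of u x] ss(1) ux by simp
      moreover have "\<bar>x\<bar> \<noteq> int (Suc k)" using False du(2) by (auto simp: abs_if)
      ultimately show ?thesis using du x0 ux by (auto simp: derangDelta_def typeDelta_def deranged_snoc)
    qed
  qed
  show "derangDelta (Suc k) \<union> (\<lambda>t. t @ [int (Suc k)]) ` {t \<in> derangB k. odd (neg t)} \<subseteq> gg ` derangD (Suc k)"
  proof
    fix y assume y: "y \<in> derangDelta (Suc k) \<union> (\<lambda>t. t @ [int (Suc k)]) ` {t \<in> derangB k. odd (neg t)}"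
    show "y \<in> gg ` derangD (Suc k)"
    proof (cases "y \<in> derangDelta (Suc k)")
      case True
      hence ys: "y \<in> signed_perms (Suc k)" "last y > 0" "is_derangement y"
        by (auto simp: derangDelta_def typeDelta_def)
      obtain u x where ux: "y = u @ [x]" "length u = k" using sp_snoc_ex[OF ys(1)] .
      have x: "x > 0" "x \<noteq> int (Suc k)" "is_derangement u" using ys ux by (auto simp: deranged_snoc)
      define z where "z = (if even (neg u) then x else - x)"
      have "u @ [z] \<in> signed_perms (Suc k)" using sp_abs_last[of u x _ z] ys(1) ux by (simp add: z_def)
      moreover have "even (neg (u @ [z]))" using x by (simp add: z_def neg_snoc)
      moreover have "is_derangement (u @ [z])" using x ux by (simp add: z_def deranged_snoc)
      moreover have "gg (u @ [z]) = y" using x ux by (simp add: z_def)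
      ultimately show ?thesis by (auto simp: derangD_def typeD_def intro!: image_eqI[where x = "u @ [z]"])
    next
      case False
      then obtain t where t: "t \<in> derangB k" "odd (neg t)" "y = t @ [int (Suc k)]" using y by auto
      have ts: "t \<in> signed_perms k" "is_derangement t" using t by (auto simp: derangB_def)
      have "t @ [- int (Suc k)] \<in> signed_perms (Suc k)" using sp_snoc_up[OF ts(1)] by simp
      moreover have "even (neg (t @ [- int (Suc k)]))" using t by (simp add: neg_snoc)
      moreover have "is_derangement (t @ [- int (Suc k)])" using ts by (simp add: deranged_snoc)
      moreover have "gg (t @ [- int (Suc k)]) = y" using t by simp
      ultimately show ?thesis by (auto simp: derangD_def typeD_def intro!: image_eqI[where x = "t @ [- int (Suc k)]"])
    qed
  qed
qed

lemma snoc_max_facts: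
  assumes "t \<in> signed_perms k"
  shows "lengthB (t @ [int (Suc k)]) = lengthB t" "neg (t @ [int (Suc k)]) = neg t"
        "fmaj (t @ [int (Suc k)]) = fmaj t"
proof -
  have lt: "\<forall>y\<in>set t. y < int (Suc k)" using sp_bounds[OF assms] by fastforce
  have "{i. i < length t \<and> t ! i > int (Suc k)} = {}" using lt by (auto simp: in_set_conv_nth) (meson nth_mem not_less_iff_gr_or_eq)
  thus "lengthB (t @ [int (Suc k)]) = lengthB t" by (simp add: lengthB_alt inv_snoc nsum_snoc)
  show "neg (t @ [int (Suc k)]) = neg t" by (simp add: neg_snoc)
  show "fmaj (t @ [int (Suc k)]) = fmaj t" by (rule fmaj_snoc_max) (use lt in auto)
qed

theorem lemma4p8:
  fixes q \<epsilon> :: "'a :: field_char_0" and n :: nat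
  assumes "\<epsilon> = 1 \<or> \<epsilon> = -1" and "n \<ge> 2"
  shows "(\<Sum>\<sigma>\<in>derangD n. \<epsilon> ^ lengthD \<sigma> * q ^ Dmaj \<sigma>)
    = (\<Sum>\<sigma>\<in>derangDelta n. \<epsilon> ^ lengthB \<sigma> * (\<epsilon> * q) ^ fmaj \<sigma>)
      + \<epsilon> / 2 * ((\<Sum>\<sigma>\<in>derangB (n - 1). \<epsilon> ^ lengthB \<sigma> * q ^ fmaj \<sigma>)
                 - (\<Sum>\<sigma>\<in>derangB (n - 1). \<epsilon> ^ lengthB \<sigma> * (- q) ^ fmaj \<sigma>))"
proof -
  have e: "\<epsilon> * \<epsilon> = 1" using assms(1) by auto
  obtain k where n0: "n = Suc k" using assms(2) by (cases n) auto
  have n: "n = Suc k" "k \<ge> 1" using n0 assms(2) by auto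
  define F where "F y = \<epsilon> ^ (lengthB y + neg y) * q ^ fmaj y" for y
  define E where "E = (\<lambda>t. t @ [int (Suc k)]) ` {t \<in> derangB k. odd (neg t)}"
  have fin: "finite (derangB k)" "finite (derangDelta (Suc k))" "finite (derangD (Suc k))"
    unfolding derangB_def derangDelta_def typeDelta_def derangD_def typeD_def
    by (rule finite_subset[OF _ finite_sp], blast)+
  have S1: "(\<Sum>\<sigma>\<in>derangD n. \<epsilon> ^ lengthD \<sigma> * q ^ Dmaj \<sigma>) = (\<Sum>\<sigma>\<in>derangD (Suc k). F (gg \<sigma>))"
    unfolding n(1)
  proof (rule sum.cong)
    fix s assume "s \<in> derangD (Suc k)"
    hence "s \<in> signed_perms (Suc k)" by (auto simp: derangD_def typeD_def)
    thus "\<epsilon> ^ lengthD s * q ^ Dmaj s = F (gg s)"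
      using sign_lemma[OF e] by (simp add: F_def Dmaj_def gg_def)
  qed simp
  also have "\<dots> = (\<Sum>y\<in>gg ` derangD (Suc k). F y)"
    using sum.reindex[OF gg_inj, of F] by simp
  also have "\<dots> = (\<Sum>y\<in>derangDelta (Suc k). F y) + (\<Sum>y\<in>E. F y)"
    unfolding gg_image[OF n(2)] E_def[symmetric]
  proof (rule sum.union_disjoint)
    show "finite (derangDelta (Suc k))" using fin by simp
    show "finite E" unfolding E_def using fin by simp
    show "derangDelta (Suc k) \<inter> E = {}"
      by (auto simp: E_def derangDelta_def deranged_snoc derangB_def sp_len)
  qed
  also have "(\<Sum>y\<in>derangDelta (Suc k). F y) = (\<Sum>\<sigma>\<in>derangDelta n. \<epsilon> ^ lengthB \<sigma> * (\<epsilon> * q) ^ fmaj \<sigma>)"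
    unfolding n(1)
  proof (rule sum.cong)
    fix y
    have "\<epsilon> ^ neg y = \<epsilon> ^ fmaj y"
      by (rule pow_eq[OF e, where c = "maj_prec y" and d = 0]) (simp add: fmaj_def)
    thus "F y = \<epsilon> ^ lengthB y * (\<epsilon> * q) ^ fmaj y"
      by (simp add: F_def power_add power_mult_distrib)
  qed simp
  also have "(\<Sum>y\<in>E. F y) = (\<Sum>t\<in>{t \<in> derangB k. odd (neg t)}. F (t @ [int (Suc k)]))"
    unfolding E_def by (subst sum.reindex) (auto simp: inj_on_def)
  also have "\<dots> = (\<Sum>t\<in>derangB k. if odd (neg t) then \<epsilon> * \<epsilon> ^ lengthB t * q ^ fmaj t else 0)"
    unfolding sum.inter_filter[OF fin(1)]
  proof (rule sum.cong)
    fix t assume t: "t \<in> derangB k"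
    show "(if odd (neg t) then F (t @ [int (Suc k)]) else 0) =
        (if odd (neg t) then \<epsilon> * \<epsilon> ^ lengthB t * q ^ fmaj t else 0)"
    proof (cases "odd (neg t)")
      case True
      have ts: "t \<in> signed_perms k" using t by (auto simp: derangB_def)
      have "\<epsilon> ^ neg t = \<epsilon> ^ 1"
        by (rule pow_eq[OF e, where c = 0 and d = "neg t div 2"]) (use True in presburger)
      thus ?thesis
        using snoc_max_facts[OF ts] True by (simp add: F_def power_add)
    qed simp
  qed simp
  also have "\<dots> = \<epsilon> / 2 * ((\<Sum>\<sigma>\<in>derangB (n - 1). \<epsilon> ^ lengthB \<sigma> * q ^ fmaj \<sigma>)
                 - (\<Sum>\<sigma>\<in>derangB (n - 1). \<epsilon> ^ lengthB \<sigma> * (- q) ^ fmaj \<sigma>))"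
    unfolding n(1) diff_Suc_1 sum_subtractf[symmetric] sum_distrib_left
  proof (rule sum.cong)
    fix t
    have par: "odd (fmaj t) = odd (neg t)" by (simp add: fmaj_def)
    show "(if odd (neg t) then \<epsilon> * \<epsilon> ^ lengthB t * q ^ fmaj t else 0)
      = \<epsilon> / 2 * (\<epsilon> ^ lengthB t * q ^ fmaj t - \<epsilon> ^ lengthB t * (- q) ^ fmaj t)"
    proof (cases "odd (fmaj t)")
      case True
      hence "(- q) ^ fmaj t = - (q ^ fmaj t)" by (simp add: power_minus_odd)
      thus ?thesis using True par by (simp add: field_simps)
    next
      case False
      hence "(- q) ^ fmaj t = q ^ fmaj t" by (simp add: power_minus_even)
      thus ?thesis using False par by simp
    qed
  qed simp
  finally show ?thesis .
qed

end
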